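(* Let $S=\bigoplus_{i\in\mathbb{Z}}S_i$ be an epsilon-strongly $\mathbb{Z}$-graded ring with principal component $R=S_0$. If $R$ is right (respectively left) noetherian, then $S$ is right (respectively left) noetherian.
   Context: All rings are associative with multiplicative identity $1\neq 0$. A ring $S$ is $\mathbb{Z}$-graded if $S=\bigoplus_{i\in\mathbb{Z}}S_i$ for additive subgroups $S_i$ with $S_iS_j\subseteq S_{i+j}$; $S_0$ is the principal component. $S$ is epsilon-strongly $\mathbb{Z}$-graded if (a) $S_iS_{-i}S_i=S_i$ for all $i$, and (b) for each $i$ the ideal $S_iS_{-i}$ of $S_0$ has a multiplicative identity. *)

theory Defs
  imports Main
begin

definition setprod :: "'a::ring_1 set \<Rightarrow> 'a set \<Rightarrow> 'a set" where
  "setprod A B = {x. \<exists>(n::nat) f g. (\<forall>k<n. f k \<in> A \<and> g k \<in> B) \<and> x = (\<Sum>k<n. f k * g k)}"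

definition additive_subgroup :: "'a::ring_1 set \<Rightarrow> bool" where
  "additive_subgroup A \<longleftrightarrow> 0 \<in> A \<and> (\<forall>x\<in>A. \<forall>y\<in>A. x + y \<in> A) \<and> (\<forall>x\<in>A. - x \<in> A)"

definition Z_graded :: "(int \<Rightarrow> 'a::ring_1 set) \<Rightarrow> bool" where
  "Z_graded G \<longleftrightarrow>
     (\<forall>i. additive_subgroup (G i)) \<and>
     (\<forall>i j. \<forall>x\<in>G i. \<forall>y\<in>G j. x * y \<in> G (i + j)) \<and>
     (\<forall>x. \<exists>!c :: int \<Rightarrow> 'a. finite {i. c i \<noteq> 0} \<and> (\<forall>i. c i \<in> G i) \<and>
            x = (\<Sum>i\<in>{i. c i \<noteq> 0}. c i))"

definition epsilon_strongly_Z_graded :: "(int \<Rightarrow> 'a::ring_1 set) \<Rightarrow> bool" where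
  "epsilon_strongly_Z_graded G \<longleftrightarrow> Z_graded G \<and>
     (\<forall>i. setprod (setprod (G i) (G (-i))) (G i) = G i) \<and>
     (\<forall>i. \<exists>e\<in>setprod (G i) (G (-i)). \<forall>x\<in>setprod (G i) (G (-i)). e * x = x \<and> x * e = x)"

definition right_ideal_in :: "'a::ring_1 set \<Rightarrow> 'a set \<Rightarrow> bool" where
  "right_ideal_in R I \<longleftrightarrow> I \<subseteq> R \<and> additive_subgroup I \<and> (\<forall>x\<in>I. \<forall>r\<in>R. x * r \<in> I)"

definition left_ideal_in :: "'a::ring_1 set \<Rightarrow> 'a set \<Rightarrow> bool" where
  "left_ideal_in R I \<longleftrightarrow> I \<subseteq> R \<and> additive_subgroup I \<and> (\<forall>x\<in>I. \<forall>r\<in>R. r * x \<in> I)"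

definition right_noetherian :: "'a::ring_1 set \<Rightarrow> bool" where
  "right_noetherian R \<longleftrightarrow> (\<forall>I :: nat \<Rightarrow> 'a set. (\<forall>n. right_ideal_in R (I n)) \<and> (\<forall>n. I n \<subseteq> I (Suc n))
      \<longrightarrow> (\<exists>N. \<forall>n\<ge>N. I n = I N))"

definition left_noetherian :: "'a::ring_1 set \<Rightarrow> bool" where
  "left_noetherian R \<longleftrightarrow> (\<forall>I :: nat \<Rightarrow> 'a set. (\<forall>n. left_ideal_in R (I n)) \<and> (\<forall>n. I n \<subseteq> I (Suc n))
      \<longrightarrow> (\<exists>N. \<forall>n\<ge>N. I n = I N))"

end

theory Submission
  imports Defs
begin


definition cmp :: "(int \<Rightarrow> 'a::ring_1 set) \<Rightarrow> 'a \<Rightarrow> int \<Rightarrow> 'a" where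
  "cmp G x = (THE c. finite {i. c i \<noteq> 0} \<and> (\<forall>i. c i \<in> G i) \<and> x = (\<Sum>i\<in>{i. c i \<noteq> 0}. c i))"

context
  fixes G :: "int \<Rightarrow> 'a::ring_1 set"
  assumes zg: "Z_graded G"
begin

lemma G_zero: "0 \<in> G i"
  using zg unfolding Z_graded_def additive_subgroup_def by blast

lemma G_add: "x \<in> G i \<Longrightarrow> y \<in> G i \<Longrightarrow> x + y \<in> G i"
  using zg unfolding Z_graded_def additive_subgroup_def by blast

lemma G_uminus: "x \<in> G i \<Longrightarrow> - x \<in> G i"
  using zg unfolding Z_graded_def additive_subgroup_def by blast

lemma G_mult: "x \<in> G i \<Longrightarrow> y \<in> G j \<Longrightarrow> x * y \<in> G (i + j)"
  using zg unfolding Z_graded_def by blast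

lemma G_sum: "finite F \<Longrightarrow> (\<And>k. k \<in> F \<Longrightarrow> f k \<in> G i) \<Longrightarrow> sum f F \<in> G i"
  by (induction F rule: finite_induct) (auto intro: G_add G_zero)

lemma cmp_props:
  "finite {i. cmp G x i \<noteq> 0} \<and> (\<forall>i. cmp G x i \<in> G i) \<and> x = (\<Sum>i\<in>{i. cmp G x i \<noteq> 0}. cmp G x i)"
proof -
  have "\<exists>!c :: int \<Rightarrow> 'a. finite {i. c i \<noteq> 0} \<and> (\<forall>i. c i \<in> G i) \<and> x = (\<Sum>i\<in>{i. c i \<noteq> 0}. c i)"
    using zg unfolding Z_graded_def by blast
  from theI'[OF this] show ?thesis unfolding cmp_def .
qed

lemma cmp_in: "cmp G x i \<in> G i"
  using cmp_props by blast

lemma cmp_fin: "finite {i. cmp G x i \<noteq> 0}"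
  using cmp_props by blast

lemma cmp_sumF:
  assumes "finite F" "{i. cmp G x i \<noteq> 0} \<subseteq> F"
  shows "x = sum (cmp G x) F"
proof -
  have "x = (\<Sum>i\<in>{i. cmp G x i \<noteq> 0}. cmp G x i)" using cmp_props by blast
  also have "\<dots> = sum (cmp G x) F"
    by (rule sum.mono_neutral_left) (use assms in auto)
  finally show ?thesis .
qed

lemma cmp_unique:
  assumes "finite F" "\<forall>i. c i \<in> G i" "\<forall>i. i \<notin> F \<longrightarrow> c i = 0" "x = sum c F"
  shows "cmp G x = c"
proof -
  have sub: "{i. c i \<noteq> 0} \<subseteq> F" using assms(3) by blast
  have fin: "finite {i. c i \<noteq> 0}" using finite_subset[OF sub assms(1)] .
  have "sum c F = (\<Sum>i\<in>{i. c i \<noteq> 0}. c i)"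
    by (rule sum.mono_neutral_right) (use assms sub in auto)
  hence P: "finite {i. c i \<noteq> 0} \<and> (\<forall>i. c i \<in> G i) \<and> x = (\<Sum>i\<in>{i. c i \<noteq> 0}. c i)"
    using fin assms by simp
  have ex: "\<exists>!c :: int \<Rightarrow> 'a. finite {i. c i \<noteq> 0} \<and> (\<forall>i. c i \<in> G i) \<and> x = (\<Sum>i\<in>{i. c i \<noteq> 0}. c i)"
    using zg unfolding Z_graded_def by blast
  show ?thesis unfolding cmp_def
    using the1_equality[OF ex] P by blast
qed

lemma cmp_zero: "cmp G 0 = (\<lambda>i. 0)"
  by (rule cmp_unique[where F="{}"]) (auto intro: G_zero)

lemma cmp_add: "cmp G (x + y) = (\<lambda>i. cmp G x i + cmp G y i)"
proof (rule cmp_unique[where F="{i. cmp G x i \<noteq> 0} \<union> {i. cmp G y i \<noteq> 0}"])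
  let ?F = "{i. cmp G x i \<noteq> 0} \<union> {i. cmp G y i \<noteq> 0}"
  show "finite ?F" using cmp_fin by auto
  show "\<forall>i. cmp G x i + cmp G y i \<in> G i" by (auto intro: G_add cmp_in)
  show "\<forall>i. i \<notin> ?F \<longrightarrow> cmp G x i + cmp G y i = 0" by auto
  have "x = sum (cmp G x) ?F" by (rule cmp_sumF) (use cmp_fin in auto)
  moreover have "y = sum (cmp G y) ?F" by (rule cmp_sumF) (use cmp_fin in auto)
  ultimately show "x + y = (\<Sum>i\<in>?F. cmp G x i + cmp G y i)"
    by (simp add: sum.distrib)
qed

lemma cmp_uminus: "cmp G (- x) = (\<lambda>i. - cmp G x i)"
proof (rule cmp_unique[where F="{i. cmp G x i \<noteq> 0}"])
  show "finite {i. cmp G x i \<noteq> 0}" using cmp_fin .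
  show "\<forall>i. - cmp G x i \<in> G i" by (auto intro: G_uminus cmp_in)
  show "\<forall>i. i \<notin> {i. cmp G x i \<noteq> 0} \<longrightarrow> - cmp G x i = 0" by auto
  have "x = sum (cmp G x) {i. cmp G x i \<noteq> 0}" by (rule cmp_sumF) (use cmp_fin in auto)
  then show "- x = (\<Sum>i\<in>{i. cmp G x i \<noteq> 0}. - cmp G x i)"
    by (simp add: sum_negf)
qed

lemma cmp_diff: "cmp G (x - y) = (\<lambda>i. cmp G x i - cmp G y i)"
  using cmp_add[of x "- y"] cmp_uminus[of y] by simp

lemma cmp_sum: "cmp G (\<Sum>k<(N::nat). f k) = (\<lambda>i. \<Sum>k<N. cmp G (f k) i)"
  by (induction N) (simp_all add: cmp_zero cmp_add)

lemma cmp_mult_right: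
  assumes s: "s \<in> G e"
  shows "cmp G (x * s) = (\<lambda>j. cmp G x (j - e) * s)"
proof (rule cmp_unique[where F="(\<lambda>i. i + e) ` {i. cmp G x i \<noteq> 0}"])
  let ?S = "{i. cmp G x i \<noteq> 0}"
  show "finite ((\<lambda>i. i + e) ` ?S)" using cmp_fin by auto
  show "\<forall>j. cmp G x (j - e) * s \<in> G j"
    using G_mult[OF cmp_in s] by (metis diff_add_cancel)
  show "\<forall>j. j \<notin> (\<lambda>i. i + e) ` ?S \<longrightarrow> cmp G x (j - e) * s = 0"
  proof (intro allI impI)
    fix j assume "j \<notin> (\<lambda>i. i + e) ` ?S"
    hence "j - e \<notin> ?S" by (metis diff_add_cancel image_eqI)
    thus "cmp G x (j - e) * s = 0" by simp
  qed
  have "x = sum (cmp G x) ?S" by (rule cmp_sumF) (use cmp_fin in auto)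
  hence "x * s = (\<Sum>i\<in>?S. cmp G x i * s)" by (metis sum_distrib_right)
  also have "\<dots> = (\<Sum>j\<in>(\<lambda>i. i + e) ` ?S. cmp G x (j - e) * s)"
    by (subst sum.reindex) (auto simp: inj_on_def)
  finally show "x * s = (\<Sum>j\<in>(\<lambda>i. i + e) ` ?S. cmp G x (j - e) * s)" .
qed

lemma cmp_mult_left:
  assumes s: "s \<in> G e"
  shows "cmp G (s * x) = (\<lambda>j. s * cmp G x (j - e))"
proof (rule cmp_unique[where F="(\<lambda>i. i + e) ` {i. cmp G x i \<noteq> 0}"])
  let ?S = "{i. cmp G x i \<noteq> 0}"
  show "finite ((\<lambda>i. i + e) ` ?S)" using cmp_fin by auto
  show "\<forall>j. s * cmp G x (j - e) \<in> G j"
    using G_mult[OF s cmp_in] by (metis add.commute diff_add_cancel)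
  show "\<forall>j. j \<notin> (\<lambda>i. i + e) ` ?S \<longrightarrow> s * cmp G x (j - e) = 0"
  proof (intro allI impI)
    fix j assume "j \<notin> (\<lambda>i. i + e) ` ?S"
    hence "j - e \<notin> ?S" by (metis diff_add_cancel image_eqI)
    thus "s * cmp G x (j - e) = 0" by simp
  qed
  have "x = sum (cmp G x) ?S" by (rule cmp_sumF) (use cmp_fin in auto)
  hence "s * x = (\<Sum>i\<in>?S. s * cmp G x i)" by (metis sum_distrib_left)
  also have "\<dots> = (\<Sum>j\<in>(\<lambda>i. i + e) ` ?S. s * cmp G x (j - e))"
    by (subst sum.reindex) (auto simp: inj_on_def)
  finally show "s * x = (\<Sum>j\<in>(\<lambda>i. i + e) ` ?S. s * cmp G x (j - e))" .
qed

lemma cmp_all_zero: "(\<forall>i. cmp G x i = 0) \<Longrightarrow> x = 0"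
  using cmp_sumF[of "{}" x] by auto

lemma supp_bounded: "\<exists>a n. \<forall>i. cmp G x i \<noteq> 0 \<longrightarrow> a \<le> i \<and> i < a + int n"
proof -
  let ?S = "{i. cmp G x i \<noteq> 0}"
  define M where "M = (\<Sum>i\<in>?S. \<bar>i\<bar>)"
  have "\<forall>i\<in>?S. \<bar>i\<bar> \<le> M" unfolding M_def
    using cmp_fin by (intro ballI member_le_sum) auto
  hence "\<forall>i. cmp G x i \<noteq> 0 \<longrightarrow> - M \<le> i \<and> i < - M + int (nat (2 * M + 1))"
    by auto
  thus ?thesis by blast
qed

end


lemma setprod_single: "a \<in> A \<Longrightarrow> b \<in> B \<Longrightarrow> a * b \<in> setprod A B"
  unfolding setprod_def
  by (intro CollectI exI[of _ "1::nat"] exI[of _ "\<lambda>_. a"] exI[of _ "\<lambda>_. b"]) simp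

lemma setprodE:
  assumes "x \<in> setprod A B"
  obtains n f g where "\<forall>k<(n::nat). f k \<in> A \<and> g k \<in> B" "x = (\<Sum>k<n. f k * g k)"
  using assms unfolding setprod_def by blast

context
  fixes G :: "int \<Rightarrow> 'a::ring_1 set"
  assumes es: "epsilon_strongly_Z_graded G"
begin

lemma es_zg: "Z_graded G"
  using es unfolding epsilon_strongly_Z_graded_def by blast

lemma es_unit: "\<exists>e\<in>setprod (G i) (G (-i)). \<forall>x\<in>setprod (G i) (G (-i)). e * x = x \<and> x * e = x"
  using es unfolding epsilon_strongly_Z_graded_def by blast

lemma es_decomp: "setprod (setprod (G i) (G (-i))) (G i) = G i"
  using es unfolding epsilon_strongly_Z_graded_def by simp

lemma eps_right:
  assumes x: "x \<in> G d"
  shows "\<exists>N u v. (\<forall>k<(N::nat). u k \<in> G (-d) \<and> v k \<in> G d) \<and> x = (\<Sum>k<N. x * u k * v k)"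
proof -
  obtain e where e: "e \<in> setprod (G (-d)) (G d)"
    and eid: "\<forall>y\<in>setprod (G (-d)) (G d). y * e = y"
    using es_unit[of "-d"] by auto
  obtain N u v where uv: "\<forall>k<(N::nat). u k \<in> G (-d) \<and> v k \<in> G d" and ee: "e = (\<Sum>k<N. u k * v k)"
    using e by (rule setprodE)
  have xe: "x * e = x"
  proof -
    have "x \<in> setprod (setprod (G d) (G (-d))) (G d)" using x by (simp only: es_decomp)
    then obtain n p q where pq: "\<forall>k<(n::nat). p k \<in> setprod (G d) (G (-d)) \<and> q k \<in> G d"
      and xs: "x = (\<Sum>k<n. p k * q k)" by (rule setprodE)
    have "p k * q k * e = p k * q k" if k: "k < n" for k
    proof -
      have "p k \<in> setprod (G d) (G (-d))" using pq k by blast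
      then obtain m a b where ab: "\<forall>l<(m::nat). a l \<in> G d \<and> b l \<in> G (-d)" and ps: "p k = (\<Sum>l<m. a l * b l)"
        by (rule setprodE)
      have "p k * q k * e = (\<Sum>l<m. a l * (b l * q k * e))"
        unfolding ps by (simp add: sum_distrib_right mult.assoc)
      also have "\<dots> = (\<Sum>l<m. a l * (b l * q k))"
      proof (rule sum.cong[OF refl])
        fix l assume "l \<in> {..<m}"
        hence "b l * q k \<in> setprod (G (-d)) (G d)" using ab pq k by (intro setprod_single) auto
        thus "a l * (b l * q k * e) = a l * (b l * q k)" using eid by simp
      qed
      also have "\<dots> = p k * q k"
        unfolding ps by (simp add: sum_distrib_right mult.assoc)
      finally show ?thesis .
    qed
    hence "x * e = (\<Sum>k<n. p k * q k)" unfolding xs sum_distrib_right by simp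
    thus ?thesis using xs by simp
  qed
  have "x = (\<Sum>k<N. x * u k * v k)"
    using xe unfolding ee by (simp add: sum_distrib_left mult.assoc)
  thus ?thesis using uv by blast
qed

lemma eps_left:
  assumes x: "x \<in> G d"
  shows "\<exists>N u v. (\<forall>k<(N::nat). v k \<in> G d \<and> u k \<in> G (-d)) \<and> x = (\<Sum>k<N. v k * u k * x)"
proof -
  obtain e where e: "e \<in> setprod (G d) (G (-d))"
    and eid: "\<forall>y\<in>setprod (G d) (G (-d)). e * y = y"
    using es_unit[of "d"] by auto
  obtain N v u where uv: "\<forall>k<(N::nat). v k \<in> G d \<and> u k \<in> G (-d)" and ee: "e = (\<Sum>k<N. v k * u k)"
    using e by (rule setprodE)
  have xe: "e * x = x"
  proof -
    have "x \<in> setprod (setprod (G d) (G (-d))) (G d)" using x by (simp only: es_decomp)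
    then obtain n p q where pq: "\<forall>k<(n::nat). p k \<in> setprod (G d) (G (-d)) \<and> q k \<in> G d"
      and xs: "x = (\<Sum>k<n. p k * q k)" by (rule setprodE)
    have "e * x = (\<Sum>k<n. (e * p k) * q k)" unfolding xs by (simp add: sum_distrib_left mult.assoc)
    also have "\<dots> = (\<Sum>k<n. p k * q k)" using pq eid by (intro sum.cong) auto
    finally show ?thesis using xs by simp
  qed
  have "x = (\<Sum>k<N. v k * u k * x)"
    using xe unfolding ee by (simp add: sum_distrib_right)
  thus ?thesis using uv by blast
qed

end


definition Tw :: "(int \<Rightarrow> 'a::ring_1 set) \<Rightarrow> nat \<Rightarrow> 'a set \<Rightarrow> 'a set" where
  "Tw G w J = {cmp G x 0 | x. x \<in> J \<and> (\<forall>i. cmp G x i \<noteq> 0 \<longrightarrow> - int w \<le> i \<and> i \<le> 0)}"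

lemma asg_sum: "additive_subgroup J \<Longrightarrow> (\<forall>k<(N::nat). f k \<in> J) \<Longrightarrow> (\<Sum>k<N. f k) \<in> J"
  by (induction N) (auto simp: additive_subgroup_def)

lemma diag:
  fixes L :: "nat \<Rightarrow> nat \<Rightarrow> 'b set"
  assumes acc: "\<forall>C::nat \<Rightarrow> 'b set. (\<forall>n. Q (C n)) \<and> (\<forall>n. C n \<subseteq> C (Suc n)) \<longrightarrow> (\<exists>N. \<forall>n\<ge>N. C n = C N)"
    and Q: "\<forall>w n. Q (L w n)" and mw: "\<forall>w n. L w n \<subseteq> L (Suc w) n"
    and mn: "\<forall>w n. L w n \<subseteq> L w (Suc n)"
  shows "\<exists>M. \<forall>n\<ge>M. \<forall>w. L w n \<subseteq> L w M"
proof -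
  have mono: "L w n \<subseteq> L w' n'" if "w \<le> w'" "n \<le> n'" for w w' n n'
  proof -
    have "L w n \<subseteq> L w' n" using lift_Suc_mono_le[of "\<lambda>w. L w n", OF _ that(1)] mw by blast
    also have "\<dots> \<subseteq> L w' n'" using lift_Suc_mono_le[of "\<lambda>n. L w' n", OF _ that(2)] mn by blast
    finally show ?thesis .
  qed
  have "\<exists>N. \<forall>n\<ge>N. L n n = L N N"
    using acc[rule_format, of "\<lambda>n. L n n"] Q mono by auto
  then obtain N where N: "\<forall>n\<ge>N. L n n = L N N" by blast
  have "\<forall>w. \<exists>K. \<forall>n\<ge>K. L w n = L w K"
    using acc Q mn by blast
  then obtain K where K: "\<forall>w n. n \<ge> K w \<longrightarrow> L w n = L w (K w)" by metis
  define M where "M = N + (\<Sum>w<N. K w)"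
  have KM: "K w \<le> M" if "w < N" for w
  proof -
    have "K w \<le> (\<Sum>w<N. K w)" using that by (intro member_le_sum) auto
    thus ?thesis unfolding M_def by simp
  qed
  have "\<forall>n\<ge>M. \<forall>w. L w n \<subseteq> L w M"
  proof (intro allI impI)
    fix n w assume n: "M \<le> n"
    show "L w n \<subseteq> L w M"
    proof (cases "w < N")
      case True
      hence "L w n = L w (K w)" "L w M = L w (K w)" using K KM n by (metis le_trans order_refl)+
      thus ?thesis by simp
    next
      case False
      have "L w n \<subseteq> L (max w n) (max w n)" by (rule mono) auto
      also have "\<dots> = L N N"
      proof -
        have "N \<le> max w n" using False by simp
        from N[rule_format, OF this] show ?thesis .
      qed
      also have "\<dots> \<subseteq> L w M" using False by (intro mono) (auto simp: M_def)
      finally show ?thesis .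
    qed
  qed
  thus ?thesis by blast
qed

context
  fixes G :: "int \<Rightarrow> 'a::ring_1 set"
  assumes es: "epsilon_strongly_Z_graded G"
begin

lemmas zg = es_zg[OF es]
lemmas c_in = cmp_in[OF zg] and c_add = cmp_add[OF zg] and c_diff = cmp_diff[OF zg]
  and c_zero = cmp_zero[OF zg] and c_sum = cmp_sum[OF zg] and c_mr = cmp_mult_right[OF zg]
  and c_ml = cmp_mult_left[OF zg] and c_all_zero = cmp_all_zero[OF zg]
  and c_bounded = supp_bounded[OF zg]

lemma Tw_right: "right_ideal_in UNIV J \<Longrightarrow> right_ideal_in (G 0) (Tw G w J)"
proof -
  assume J: "right_ideal_in UNIV J"
  have sub: "Tw G w J \<subseteq> G 0" unfolding Tw_def using c_in by blast
  have z: "0 \<in> Tw G w J" unfolding Tw_def using J c_zero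
    by (auto simp: right_ideal_in_def additive_subgroup_def intro!: exI[of _ 0])
  have a: "x + y \<in> Tw G w J" if hx: "x \<in> Tw G w J" and hy: "y \<in> Tw G w J" for x y
  proof -
    obtain x' where "x' \<in> J" "x = cmp G x' 0"
      "\<forall>i. cmp G x' i \<noteq> 0 \<longrightarrow> - int w \<le> i \<and> i \<le> 0"
      using hx unfolding Tw_def by blast
    moreover obtain y' where "y' \<in> J" "y = cmp G y' 0"
      "\<forall>i. cmp G y' i \<noteq> 0 \<longrightarrow> - int w \<le> i \<and> i \<le> 0"
      using hy unfolding Tw_def by blast
    ultimately show ?thesis unfolding Tw_def using J
      by (auto simp: right_ideal_in_def additive_subgroup_def c_add intro!: exI[of _ "x' + y'"])
        (metis add.left_neutral)+
  qed
  have n: "- x \<in> Tw G w J" if hx: "x \<in> Tw G w J" for x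
  proof -
    obtain x' where "x' \<in> J" "x = cmp G x' 0"
      "\<forall>i. cmp G x' i \<noteq> 0 \<longrightarrow> - int w \<le> i \<and> i \<le> 0"
      using hx unfolding Tw_def by blast
    thus ?thesis unfolding Tw_def using J c_diff[of 0 x'] c_zero
      by (auto simp: right_ideal_in_def additive_subgroup_def intro!: exI[of _ "- x'"])
  qed
  have m: "x * r \<in> Tw G w J" if hx: "x \<in> Tw G w J" and hr: "r \<in> G 0" for x r
  proof -
    obtain x' where "x' \<in> J" "x = cmp G x' 0"
      "\<forall>i. cmp G x' i \<noteq> 0 \<longrightarrow> - int w \<le> i \<and> i \<le> 0"
      using hx unfolding Tw_def by blast
    thus ?thesis unfolding Tw_def using J c_mr[OF hr, of x']
      by (auto simp: right_ideal_in_def intro!: exI[of _ "x' * r"]) (metis mult_zero_left)+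
  qed
  show ?thesis unfolding right_ideal_in_def additive_subgroup_def using sub z a n m by blast
qed

lemma Tw_left: "left_ideal_in UNIV J \<Longrightarrow> left_ideal_in (G 0) (Tw G w J)"
proof -
  assume J: "left_ideal_in UNIV J"
  have sub: "Tw G w J \<subseteq> G 0" unfolding Tw_def using c_in by blast
  have z: "0 \<in> Tw G w J" unfolding Tw_def using J c_zero
    by (auto simp: left_ideal_in_def additive_subgroup_def intro!: exI[of _ 0])
  have a: "x + y \<in> Tw G w J" if hx: "x \<in> Tw G w J" and hy: "y \<in> Tw G w J" for x y
  proof -
    obtain x' where "x' \<in> J" "x = cmp G x' 0"
      "\<forall>i. cmp G x' i \<noteq> 0 \<longrightarrow> - int w \<le> i \<and> i \<le> 0"
      using hx unfolding Tw_def by blast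
    moreover obtain y' where "y' \<in> J" "y = cmp G y' 0"
      "\<forall>i. cmp G y' i \<noteq> 0 \<longrightarrow> - int w \<le> i \<and> i \<le> 0"
      using hy unfolding Tw_def by blast
    ultimately show ?thesis unfolding Tw_def using J
      by (auto simp: left_ideal_in_def additive_subgroup_def c_add intro!: exI[of _ "x' + y'"])
        (metis add.left_neutral)+
  qed
  have n: "- x \<in> Tw G w J" if hx: "x \<in> Tw G w J" for x
  proof -
    obtain x' where "x' \<in> J" "x = cmp G x' 0"
      "\<forall>i. cmp G x' i \<noteq> 0 \<longrightarrow> - int w \<le> i \<and> i \<le> 0"
      using hx unfolding Tw_def by blast
    thus ?thesis unfolding Tw_def using J c_diff[of 0 x'] c_zero
      by (auto simp: left_ideal_in_def additive_subgroup_def intro!: exI[of _ "- x'"])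
  qed
  have m: "r * x \<in> Tw G w J" if hx: "x \<in> Tw G w J" and hr: "r \<in> G 0" for x r
  proof -
    obtain x' where "x' \<in> J" "x = cmp G x' 0"
      "\<forall>i. cmp G x' i \<noteq> 0 \<longrightarrow> - int w \<le> i \<and> i \<le> 0"
      using hx unfolding Tw_def by blast
    thus ?thesis unfolding Tw_def using J c_ml[OF hr, of x']
      by (auto simp: left_ideal_in_def intro!: exI[of _ "r * x'"]) (metis mult_zero_right)+
  qed
  show ?thesis unfolding left_ideal_in_def additive_subgroup_def using sub z a n m by blast
qed

lemma Tw_mono_w: "Tw G w J \<subseteq> Tw G (Suc w) J"
  unfolding Tw_def by fastforce

lemma Tw_mono_J: "J \<subseteq> J' \<Longrightarrow> Tw G w J \<subseteq> Tw G w J'"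
  unfolding Tw_def by blast

end


context
  fixes G :: "int \<Rightarrow> 'a::ring_1 set"
  assumes es: "epsilon_strongly_Z_graded G"
begin

lemmas zg' = es_zg[OF es]
lemmas d_in = cmp_in[OF zg'] and d_diff = cmp_diff[OF zg']
  and d_sum = cmp_sum[OF zg'] and d_mr = cmp_mult_right[OF zg']
  and d_ml = cmp_mult_left[OF zg'] and d_all_zero = cmp_all_zero[OF zg']
  and d_bounded = supp_bounded[OF zg']

lemma key_right:
  assumes J: "right_ideal_in UNIV J" and J': "right_ideal_in UNIV J'" and sub: "J \<subseteq> J'"
    and T: "\<forall>w. Tw G w J' \<subseteq> Tw G w J"
  shows "J' \<subseteq> J"
proof -
  have asJ: "additive_subgroup J" and mJ: "\<forall>x\<in>J. \<forall>r. x * r \<in> J"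
    using J unfolding right_ideal_in_def by auto
  have asJ': "additive_subgroup J'" and mJ': "\<forall>x\<in>J'. \<forall>r. x * r \<in> J'"
    using J' unfolding right_ideal_in_def by auto
  have main: "\<forall>a x. x \<in> J' \<longrightarrow> (\<forall>i. cmp G x i \<noteq> 0 \<longrightarrow> a \<le> i \<and> i < a + int n) \<longrightarrow> x \<in> J" for n
  proof (induction n)
    case 0
    show ?case
    proof (intro allI impI)
      fix a x assume "x \<in> J'" "\<forall>i. cmp G x i \<noteq> 0 \<longrightarrow> a \<le> i \<and> i < a + int 0"
      hence "x = 0" using d_all_zero by force
      thus "x \<in> J" using asJ unfolding additive_subgroup_def by simp
    qed
  next
    case (Suc n)
    show ?case
    proof (intro allI impI)
      fix a x assume xJ': "x \<in> J'" and sx: "\<forall>i. cmp G x i \<noteq> 0 \<longrightarrow> a \<le> i \<and> i < a + int (Suc n)"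
      define b where "b = a + int n"
      obtain N u v where uv: "\<forall>k<(N::nat). u k \<in> G (-b) \<and> v k \<in> G b"
        and xb: "cmp G x b = (\<Sum>k<N. cmp G x b * u k * v k)"
        using eps_right[OF es d_in] by blast
      have ex: "\<exists>y. y \<in> J \<and> (\<forall>i. cmp G y i \<noteq> 0 \<longrightarrow> - int n \<le> i \<and> i \<le> 0) \<and> cmp G y 0 = cmp G x b * u k"
        if k: "k < N" for k
      proof -
        have c: "cmp G (x * u k) = (\<lambda>j. cmp G x (j + b) * u k)"
          using d_mr[of "u k" "-b" x] uv k by simp
        have "x * u k \<in> J'" using xJ' mJ' by blast
        moreover have "\<forall>i. cmp G (x * u k) i \<noteq> 0 \<longrightarrow> - int n \<le> i \<and> i \<le> 0"
        proof (intro allI impI)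
          fix i assume "cmp G (x * u k) i \<noteq> 0"
          hence "cmp G x (i + b) \<noteq> 0" unfolding c by auto
          thus "- int n \<le> i \<and> i \<le> 0" using sx b_def by force
        qed
        ultimately have "cmp G (x * u k) 0 \<in> Tw G n J'" unfolding Tw_def by blast
        hence "cmp G x b * u k \<in> Tw G n J" using T c by auto
        thus ?thesis unfolding Tw_def by auto
      qed
      have "\<forall>k. \<exists>y. k < N \<longrightarrow> y \<in> J \<and> (\<forall>i. cmp G y i \<noteq> 0 \<longrightarrow> - int n \<le> i \<and> i \<le> 0) \<and> cmp G y 0 = cmp G x b * u k"
        using ex by blast
      then obtain Y where Y: "\<forall>k. k < N \<longrightarrow> Y k \<in> J \<and> (\<forall>i. cmp G (Y k) i \<noteq> 0 \<longrightarrow> - int n \<le> i \<and> i \<le> 0) \<and> cmp G (Y k) 0 = cmp G x b * u k"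
        by metis
      define z where "z = (\<Sum>k<N. Y k * v k)"
      have zJ: "z \<in> J" unfolding z_def using Y mJ by (intro asg_sum[OF asJ]) blast
      have cz: "cmp G z j = (\<Sum>k<N. cmp G (Y k) (j - b) * v k)" for j
        unfolding z_def d_sum using d_mr uv by (intro sum.cong) auto
      have czb: "cmp G z b = cmp G x b"
        using xb Y unfolding cz by (simp add: mult.assoc)
      have czo: "cmp G z j = 0" if "\<not> (a \<le> j \<and> j \<le> b)" for j
        unfolding cz
      proof (rule sum.neutral, rule ballI)
        fix k assume "k \<in> {..<N}"
        hence "cmp G (Y k) (j - b) = 0" using Y that b_def by force
        thus "cmp G (Y k) (j - b) * v k = 0" by simp
      qed
      have "x - z \<in> J'" using xJ' zJ sub asJ' unfolding additive_subgroup_def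
        by (metis diff_conv_add_uminus subsetD)
      moreover have "\<forall>i. cmp G (x - z) i \<noteq> 0 \<longrightarrow> a \<le> i \<and> i < a + int n"
      proof (intro allI impI)
        fix i assume h: "cmp G (x - z) i \<noteq> 0"
        show "a \<le> i \<and> i < a + int n"
        proof (cases "i = b")
          case True thus ?thesis using h czb by (simp add: d_diff)
        next
          case False
          show ?thesis
          proof (cases "a \<le> i \<and> i \<le> b")
            case True thus ?thesis using False b_def by auto
          next
            case F2: False
            hence "cmp G x i = 0" using sx b_def by force
            thus ?thesis using h czo[OF F2] by (simp add: d_diff)
          qed
        qed
      qed
      ultimately have "x - z \<in> J" using Suc.IH by blast
      hence "(x - z) + z \<in> J" using zJ asJ unfolding additive_subgroup_def by blast
      thus "x \<in> J" by simp
    qed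
  qed
  show ?thesis
  proof
    fix x assume "x \<in> J'"
    moreover obtain a n where "\<forall>i. cmp G x i \<noteq> 0 \<longrightarrow> a \<le> i \<and> i < a + int n"
      using d_bounded by blast
    ultimately show "x \<in> J" using main by blast
  qed
qed

lemma key_left:
  assumes J: "left_ideal_in UNIV J" and J': "left_ideal_in UNIV J'" and sub: "J \<subseteq> J'"
    and T: "\<forall>w. Tw G w J' \<subseteq> Tw G w J"
  shows "J' \<subseteq> J"
proof -
  have asJ: "additive_subgroup J" and mJ: "\<forall>x\<in>J. \<forall>r. r * x \<in> J"
    using J unfolding left_ideal_in_def by auto
  have asJ': "additive_subgroup J'" and mJ': "\<forall>x\<in>J'. \<forall>r. r * x \<in> J'"
    using J' unfolding left_ideal_in_def by auto
  have main: "\<forall>a x. x \<in> J' \<longrightarrow> (\<forall>i. cmp G x i \<noteq> 0 \<longrightarrow> a \<le> i \<and> i < a + int n) \<longrightarrow> x \<in> J" for n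
  proof (induction n)
    case 0
    show ?case
    proof (intro allI impI)
      fix a x assume "x \<in> J'" "\<forall>i. cmp G x i \<noteq> 0 \<longrightarrow> a \<le> i \<and> i < a + int 0"
      hence "x = 0" using d_all_zero by force
      thus "x \<in> J" using asJ unfolding additive_subgroup_def by simp
    qed
  next
    case (Suc n)
    show ?case
    proof (intro allI impI)
      fix a x assume xJ': "x \<in> J'" and sx: "\<forall>i. cmp G x i \<noteq> 0 \<longrightarrow> a \<le> i \<and> i < a + int (Suc n)"
      define b where "b = a + int n"
      obtain N u v where uv: "\<forall>k<(N::nat). v k \<in> G b \<and> u k \<in> G (-b)"
        and xb: "cmp G x b = (\<Sum>k<N. v k * u k * cmp G x b)"
        using eps_left[OF es d_in] by blast
      have ex: "\<exists>y. y \<in> J \<and> (\<forall>i. cmp G y i \<noteq> 0 \<longrightarrow> - int n \<le> i \<and> i \<le> 0) \<and> cmp G y 0 = u k * cmp G x b"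
        if k: "k < N" for k
      proof -
        have c: "cmp G (u k * x) = (\<lambda>j. u k * cmp G x (j + b))"
          using d_ml[of "u k" "-b" x] uv k by simp
        have "u k * x \<in> J'" using xJ' mJ' by blast
        moreover have "\<forall>i. cmp G (u k * x) i \<noteq> 0 \<longrightarrow> - int n \<le> i \<and> i \<le> 0"
        proof (intro allI impI)
          fix i assume "cmp G (u k * x) i \<noteq> 0"
          hence "cmp G x (i + b) \<noteq> 0" unfolding c by auto
          thus "- int n \<le> i \<and> i \<le> 0" using sx b_def by force
        qed
        ultimately have "cmp G (u k * x) 0 \<in> Tw G n J'" unfolding Tw_def by blast
        hence "u k * cmp G x b \<in> Tw G n J" using T c by auto
        thus ?thesis unfolding Tw_def by auto
      qed
      have "\<forall>k. \<exists>y. k < N \<longrightarrow> y \<in> J \<and> (\<forall>i. cmp G y i \<noteq> 0 \<longrightarrow> - int n \<le> i \<and> i \<le> 0) \<and> cmp G y 0 = u k * cmp G x b"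
        using ex by blast
      then obtain Y where Y: "\<forall>k. k < N \<longrightarrow> Y k \<in> J \<and> (\<forall>i. cmp G (Y k) i \<noteq> 0 \<longrightarrow> - int n \<le> i \<and> i \<le> 0) \<and> cmp G (Y k) 0 = u k * cmp G x b"
        by metis
      define z where "z = (\<Sum>k<N. v k * Y k)"
      have zJ: "z \<in> J" unfolding z_def using Y mJ by (intro asg_sum[OF asJ]) blast
      have cz: "cmp G z j = (\<Sum>k<N. v k * cmp G (Y k) (j - b))" for j
        unfolding z_def d_sum using d_ml uv by (intro sum.cong) auto
      have czb: "cmp G z b = cmp G x b"
        using xb Y unfolding cz by (simp add: mult.assoc)
      have czo: "cmp G z j = 0" if "\<not> (a \<le> j \<and> j \<le> b)" for j
        unfolding cz
      proof (rule sum.neutral, rule ballI)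
        fix k assume "k \<in> {..<N}"
        hence "cmp G (Y k) (j - b) = 0" using Y that b_def by force
        thus "v k * cmp G (Y k) (j - b) = 0" by simp
      qed
      have "x - z \<in> J'" using xJ' zJ sub asJ' unfolding additive_subgroup_def
        by (metis diff_conv_add_uminus subsetD)
      moreover have "\<forall>i. cmp G (x - z) i \<noteq> 0 \<longrightarrow> a \<le> i \<and> i < a + int n"
      proof (intro allI impI)
        fix i assume h: "cmp G (x - z) i \<noteq> 0"
        show "a \<le> i \<and> i < a + int n"
        proof (cases "i = b")
          case True thus ?thesis using h czb by (simp add: d_diff)
        next
          case False
          show ?thesis
          proof (cases "a \<le> i \<and> i \<le> b")
            case True thus ?thesis using False b_def by auto
          next
            case F2: False
            hence "cmp G x i = 0" using sx b_def by force
            thus ?thesis using h czo[OF F2] by (simp add: d_diff)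
          qed
        qed
      qed
      ultimately have "x - z \<in> J" using Suc.IH by blast
      hence "(x - z) + z \<in> J" using zJ asJ unfolding additive_subgroup_def by blast
      thus "x \<in> J" by simp
    qed
  qed
  show ?thesis
  proof
    fix x assume "x \<in> J'"
    moreover obtain a n where "\<forall>i. cmp G x i \<noteq> 0 \<longrightarrow> a \<le> i \<and> i < a + int n"
      using d_bounded by blast
    ultimately show "x \<in> J" using main by blast
  qed
qed

end

theorem proposition3p6:
  fixes G :: "int \<Rightarrow> 'a::ring_1 set"
  assumes "epsilon_strongly_Z_graded G"
  shows "(right_noetherian (G 0) \<longrightarrow> right_noetherian (UNIV :: 'a set)) \<and>
         (left_noetherian (G 0) \<longrightarrow> left_noetherian (UNIV :: 'a set))"
proof (intro conjI impI)
  assume rn: "right_noetherian (G 0)"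
  show "right_noetherian (UNIV :: 'a set)" unfolding right_noetherian_def
  proof (intro allI impI, elim conjE)
    fix I :: "nat \<Rightarrow> 'a set"
    assume Ii: "\<forall>n. right_ideal_in UNIV (I n)" and Ic: "\<forall>n. I n \<subseteq> I (Suc n)"
    have Imono: "m \<le> n \<Longrightarrow> I m \<subseteq> I n" for m n
      using lift_Suc_mono_le[of I] Ic by blast
    have "\<exists>M. \<forall>n\<ge>M. \<forall>w. Tw G w (I n) \<subseteq> Tw G w (I M)"
    proof (rule diag[where Q="right_ideal_in (G 0)"])
      show "\<forall>C. (\<forall>n. right_ideal_in (G 0) (C n)) \<and> (\<forall>n. C n \<subseteq> C (Suc n)) \<longrightarrow> (\<exists>N. \<forall>n\<ge>N. C n = C N)"
        using rn unfolding right_noetherian_def .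
      show "\<forall>w n. right_ideal_in (G 0) (Tw G w (I n))" using Tw_right[OF assms] Ii by blast
      show "\<forall>w n. Tw G w (I n) \<subseteq> Tw G (Suc w) (I n)" using Tw_mono_w[OF assms] by blast
      show "\<forall>w n. Tw G w (I n) \<subseteq> Tw G w (I (Suc n))" using Tw_mono_J[OF assms] Ic by blast
    qed
    then obtain M where M: "\<forall>n\<ge>M. \<forall>w. Tw G w (I n) \<subseteq> Tw G w (I M)" by blast
    have "\<forall>n\<ge>M. I n = I M"
    proof (intro allI impI)
      fix n assume n: "M \<le> n"
      have "I n \<subseteq> I M" using key_right[OF assms Ii[rule_format, of M] Ii[rule_format, of n] Imono[OF n]] M n by blast
      thus "I n = I M" using Imono[OF n] by blast
    qed
    thus "\<exists>N. \<forall>n\<ge>N. I n = I N" by blast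
  qed
next
  assume rn: "left_noetherian (G 0)"
  show "left_noetherian (UNIV :: 'a set)" unfolding left_noetherian_def
  proof (intro allI impI, elim conjE)
    fix I :: "nat \<Rightarrow> 'a set"
    assume Ii: "\<forall>n. left_ideal_in UNIV (I n)" and Ic: "\<forall>n. I n \<subseteq> I (Suc n)"
    have Imono: "m \<le> n \<Longrightarrow> I m \<subseteq> I n" for m n
      using lift_Suc_mono_le[of I] Ic by blast
    have "\<exists>M. \<forall>n\<ge>M. \<forall>w. Tw G w (I n) \<subseteq> Tw G w (I M)"
    proof (rule diag[where Q="left_ideal_in (G 0)"])
      show "\<forall>C. (\<forall>n. left_ideal_in (G 0) (C n)) \<and> (\<forall>n. C n \<subseteq> C (Suc n)) \<longrightarrow> (\<exists>N. \<forall>n\<ge>N. C n = C N)"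
        using rn unfolding left_noetherian_def .
      show "\<forall>w n. left_ideal_in (G 0) (Tw G w (I n))" using Tw_left[OF assms] Ii by blast
      show "\<forall>w n. Tw G w (I n) \<subseteq> Tw G (Suc w) (I n)" using Tw_mono_w[OF assms] by blast
      show "\<forall>w n. Tw G w (I n) \<subseteq> Tw G w (I (Suc n))" using Tw_mono_J[OF assms] Ic by blast
    qed
    then obtain M where M: "\<forall>n\<ge>M. \<forall>w. Tw G w (I n) \<subseteq> Tw G w (I M)" by blast
    have "\<forall>n\<ge>M. I n = I M"
    proof (intro allI impI)
      fix n assume n: "M \<le> n"
      have "I n \<subseteq> I M" using key_left[OF assms Ii[rule_format, of M] Ii[rule_format, of n] Imono[OF n]] M n by blast
      thus "I n = I M" using Imono[OF n] by blast
    qed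
    thus "\<exists>N. \<forall>n\<ge>N. I n = I N" by blast
  qed
qed

end
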